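(* Let $\mathcal G$ be a region (nonempty open connected subset) of $\mathbb C$ and let $S:\mathcal G\to\mathbb C^{p\times q}$ be holomorphic with $\|S(z)\|\le1$ (operator norm) for all $z\in\mathcal G$. (a) If $U\in\mathbb C^{p\times q}$ satisfies $U^*U=I_q$, then $\mathcal N(U+S(w))=\mathcal N(U+S(z))$ for all $w,z\in\mathcal G$. (b) If $V\in\mathbb C^{p\times q}$ satisfies $VV^*=I_p$, then $\mathcal R(V+S(w))=\mathcal R(V+S(z))$ for all $w,z\in\mathcal G$.
   Context: $\mathcal N(A)$ and $\mathcal R(A)$ denote the null space and the column space of a matrix $A$. *)

theory Defs
  imports "HOL-Analysis.Analysis"
begin

definition adjoint_mat :: "complex ^ 'n ^ 'm \<Rightarrow> complex ^ 'm ^ 'n" where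
  "adjoint_mat A = (\<chi> i j. cnj (A $ j $ i))"

definition null_space_mat :: "complex ^ 'n ^ 'm \<Rightarrow> (complex ^ 'n) set" where
  "null_space_mat A = {x. A *v x = 0}"

definition col_space_mat :: "complex ^ 'n ^ 'm \<Rightarrow> (complex ^ 'm) set" where
  "col_space_mat A = range (\<lambda>x. A *v x)"

end

theory Submission
  imports Defs "HOL-Complex_Analysis.Conformal_Mappings"
begin

definition cinner :: "complex ^ 'n \<Rightarrow> complex ^ 'n \<Rightarrow> complex" where
  "cinner x y = (\<Sum>i\<in>UNIV. x $ i * cnj (y $ i))"

lemma cinner_re: "Re (cinner x y) = inner x y"
  by (simp add: cinner_def inner_vec_def inner_complex_def)

lemma cinner_self: "cinner x x = of_real (norm x ^ 2)"
proof (rule complex_eqI)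
  show "Re (cinner x x) = Re (of_real (norm x ^ 2))"
    by (simp add: cinner_re power2_norm_eq_inner)
  show "Im (cinner x x) = Im (of_real (norm x ^ 2))"
    by (simp add: cinner_def Im_sum)
qed

lemma cinner_norm: "norm x ^ 2 = Re (cinner x x)"
  by (simp add: cinner_re power2_norm_eq_inner)

lemma cinner_adj: "cinner (A *v x) y = cinner x (adjoint_mat A *v y)"
proof -
  have "cinner (A *v x) y = (\<Sum>i\<in>UNIV. \<Sum>j\<in>UNIV. A$i$j * x$j * cnj (y$i))"
    unfolding cinner_def matrix_vector_mult_def by (simp add: sum_distrib_right)
  also have "\<dots> = (\<Sum>j\<in>UNIV. \<Sum>i\<in>UNIV. A$i$j * x$j * cnj (y$i))"
    by (rule sum.swap)
  also have "\<dots> = cinner x (adjoint_mat A *v y)"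
    unfolding cinner_def matrix_vector_mult_def adjoint_mat_def
    by (simp add: sum_distrib_left mult_ac)
  finally show ?thesis .
qed

lemma adj_adj: "adjoint_mat (adjoint_mat A) = A"
  by (simp add: adjoint_mat_def vec_eq_iff)

lemma adj_add: "adjoint_mat (A + B) = adjoint_mat A + adjoint_mat B"
  by (simp add: adjoint_mat_def vec_eq_iff)

lemma cinner_neg2: "cinner x (- y) = - cinner x y"
  by (simp add: cinner_def sum_negf)

lemma cinner_neg1: "cinner (- x) y = - cinner x y"
  by (simp add: cinner_def sum_negf)

lemma cinner_zero2: "cinner x 0 = 0"
  by (simp add: cinner_def)

lemma cinner_cs: "cmod (cinner x y) \<le> norm x * norm y"
proof (cases "cinner x y = 0")
  case True then show ?thesis by simp
next
  case False
  define c where "c = cinner x y"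
  define u where "u = c / of_real (cmod c)"
  have cu: "cmod u = 1" using False by (simp add: u_def c_def norm_divide)
  define y' where "y' = (\<chi> i. u * y $ i)"
  have "cinner x y' = cnj u * c"
    by (simp add: cinner_def y'_def c_def sum_distrib_left mult_ac)
  also have "\<dots> = of_real (cmod c)"
    using False unfolding u_def c_def
    by (simp add: complex_norm_square[symmetric] power2_eq_square field_simps)
  finally have "cmod c = inner x y'" by (metis Re_complex_of_real cinner_re)
  also have "\<dots> \<le> norm x * norm y'" by (rule norm_cauchy_schwarz)
  also have "norm y' = norm y"
    by (simp add: norm_vec_def y'_def norm_mult cu)
  finally show ?thesis by (simp add: c_def)
qed

lemma core:
  fixes T :: "complex \<Rightarrow> complex ^ 'n ^ 'm"
  assumes "open G" "connected G"
    and hol: "\<And>i j. (\<lambda>z. T z $ i $ j) holomorphic_on G"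
    and bd: "\<And>z v. z \<in> G \<Longrightarrow> norm (T z *v v) \<le> norm v"
    and nc: "norm c = norm a" and w: "w \<in> G"
    and fw: "cinner (T w *v a) c = - of_real (norm a ^ 2)"
    and z: "z \<in> G"
  shows "cinner (T z *v a) c = - of_real (norm a ^ 2)"
proof -
  define f where "f z = cinner (T z *v a) c" for z
  have "f holomorphic_on G"
    unfolding f_def cinner_def matrix_vector_mult_def
    by (simp only: vec_lambda_beta) (intro holomorphic_intros hol)
  moreover have "norm (f z) \<le> norm (f w)" if "z \<in> G" for z
  proof -
    have "norm (f z) \<le> norm (T z *v a) * norm c" unfolding f_def by (rule cinner_cs)
    also have "\<dots> \<le> norm a * norm c" by (rule mult_right_mono[OF bd[OF that]]) simp
    also have "\<dots> = norm (f w)" using nc fw by (simp add: f_def power2_eq_square norm_mult)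
    finally show ?thesis .
  qed
  ultimately have "f constant_on G"
    using maximum_modulus_principle[of f G G w] assms by auto
  then have "f z = f w" using z w by (auto simp: constant_on_def)
  then show ?thesis using fw by (simp add: f_def)
qed

lemma finish:
  fixes u v :: "complex ^ 'n"
  assumes "norm u \<le> r" "norm v = r" "inner u v = - (r ^ 2)"
  shows "u + v = 0"
proof -
  have "norm (u + v) ^ 2 = norm u ^ 2 + 2 * inner u v + norm v ^ 2"
    by (simp add: power2_norm_eq_inner inner_add inner_commute)
  also have "\<dots> \<le> 0"
  proof -
    have "norm u ^ 2 \<le> r ^ 2" by (rule power_mono[OF assms(1) norm_ge_zero])
    then show ?thesis using assms(2,3) by simp
  qed
  finally show ?thesis by simp
qed

lemma onorm_bd:
  fixes A :: "complex ^ 'q ^ 'p"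
  assumes "onorm (\<lambda>x. A *v x) \<le> 1"
  shows "norm (A *v v) \<le> norm v"
proof -
  have "norm (A *v v) \<le> onorm (\<lambda>x. A *v x) * norm v"
    by (rule onorm) simp
  also have "\<dots> \<le> 1 * norm v" by (rule mult_right_mono[OF assms]) simp
  finally show ?thesis by simp
qed

lemma part_a:
  fixes G :: "complex set" and S :: "complex \<Rightarrow> complex ^ 'q ^ 'p"
  assumes "open G" and "connected G"
    and hol: "\<And>i j. (\<lambda>z. S z $ i $ j) holomorphic_on G"
    and on: "\<forall>z\<in>G. onorm (\<lambda>x. S z *v x) \<le> 1"
    and U: "adjoint_mat U ** U = mat 1" and w: "w \<in> G" and z: "z \<in> G"
    and x: "(U + S w) *v x = 0"
  shows "(U + S z) *v x = 0"
proof -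
  have bd: "\<And>z v. z \<in> G \<Longrightarrow> norm (S z *v v) \<le> norm v"
    using on onorm_bd by auto
  have "cinner (U *v x) (U *v x) = cinner x x"
    by (simp add: cinner_adj matrix_vector_mul_assoc U)
  then have "norm (U *v x) ^ 2 = norm x ^ 2" by (metis cinner_norm)
  then have nU: "norm (U *v x) = norm x" by (simp add: power2_eq_iff_nonneg)
  have Sw: "S w *v x = - (U *v x)"
  proof -
    have h: "U *v x + S w *v x = 0" using x by (simp add: matrix_vector_mult_add_rdistrib)
    have "S w *v x = (U *v x + S w *v x) - U *v x" by simp
    also have "\<dots> = - (U *v x)" using h by simp
    finally show ?thesis .
  qed
  have fw: "cinner (S w *v x) (U *v x) = - of_real (norm x ^ 2)"
    by (simp add: Sw cinner_neg1 cinner_self nU)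
  have fz: "cinner (S z *v x) (U *v x) = - of_real (norm x ^ 2)"
    by (rule core[OF assms(1,2) hol bd nU w fw z])
  have "inner (S z *v x) (U *v x) = - (norm x ^ 2)"
    using arg_cong[OF fz, of Re] by (simp add: cinner_re)
  then have "S z *v x + U *v x = 0"
    by (intro finish[OF bd[OF z] nU])
  then show ?thesis by (simp add: matrix_vector_mult_add_rdistrib add.commute)
qed

lemma part_b:
  fixes G :: "complex set" and S :: "complex \<Rightarrow> complex ^ 'q ^ 'p"
  assumes "open G" and "connected G"
    and hol: "\<And>i j. (\<lambda>z. S z $ i $ j) holomorphic_on G"
    and on: "\<forall>z\<in>G. onorm (\<lambda>x. S z *v x) \<le> 1"
    and V: "V ** adjoint_mat V = mat 1" and w: "w \<in> G" and z: "z \<in> G"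
    and y: "adjoint_mat (V + S w) *v y = 0"
  shows "adjoint_mat (V + S z) *v y = 0"
proof -
  have bd: "\<And>z v. z \<in> G \<Longrightarrow> norm (S z *v v) \<le> norm v"
    using on onorm_bd by auto
  define a where "a = adjoint_mat V *v y"
  have "cinner a a = cinner y y"
    by (simp add: a_def cinner_adj adj_adj matrix_vector_mul_assoc V)
  then have "norm a ^ 2 = norm y ^ 2" by (metis cinner_norm)
  then have na: "norm y = norm a" by (simp add: power2_eq_iff_nonneg)
  have nb: "norm (adjoint_mat (S t) *v y) \<le> norm y" if t: "t \<in> G" for t
  proof -
    define b where "b = adjoint_mat (S t) *v y"
    have "cinner b b = cinner y (S t *v b)"
      by (simp add: b_def cinner_adj adj_adj)
    then have e: "cinner y (S t *v b) = of_real (norm b ^ 2)"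
      by (metis cinner_self)
    have "norm b ^ 2 = cmod (cinner y (S t *v b))"
      by (simp only: e norm_of_real) simp
    also have "\<dots> \<le> norm y * norm (S t *v b)" by (rule cinner_cs)
    also have "\<dots> \<le> norm y * norm b" by (rule mult_left_mono[OF bd[OF t]]) simp
    finally have nb2: "norm b * norm b \<le> norm y * norm b" by (simp add: power2_eq_square)
    show ?thesis
    proof (cases "norm b = 0")
      case True then show ?thesis unfolding b_def by simp
    next
      case False
      then have "norm b > 0" by simp
      then show ?thesis using nb2 unfolding b_def by (simp add: mult_le_cancel_right)
    qed
  qed
  have bw: "adjoint_mat (S w) *v y = - a"
  proof -
    have h: "adjoint_mat V *v y + adjoint_mat (S w) *v y = 0"
      using y unfolding adj_add by (simp add: matrix_vector_mult_add_rdistrib)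
    have "adjoint_mat (S w) *v y = (adjoint_mat V *v y + adjoint_mat (S w) *v y) - adjoint_mat V *v y" by simp
    also have "\<dots> = - a" using h by (simp add: a_def)
    finally show ?thesis .
  qed
  have fw: "cinner (S w *v a) y = - of_real (norm a ^ 2)"
    by (simp add: cinner_adj bw cinner_neg2 cinner_self)
  have fz: "cinner (S z *v a) y = - of_real (norm a ^ 2)"
    by (rule core[OF assms(1,2) hol bd na w fw z])
  then have fa: "cinner a (adjoint_mat (S z) *v y) = - of_real (norm a ^ 2)"
    by (simp add: cinner_adj)
  have "inner (adjoint_mat (S z) *v y) a = - (norm a ^ 2)"
    using arg_cong[OF fa, of Re] by (simp add: cinner_re inner_commute)
  then have "adjoint_mat (S z) *v y + a = 0"
    by (intro finish[OF _ refl]) (use nb[OF z] na in simp)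
  then show ?thesis
    unfolding adj_add a_def by (simp add: matrix_vector_mult_add_rdistrib add.commute)
qed

lemma range_incl:
  fixes A B :: "complex ^ 'q ^ 'p"
  assumes AB: "\<And>y. adjoint_mat A *v y = 0 \<Longrightarrow> adjoint_mat B *v y = 0"
  shows "col_space_mat B \<subseteq> col_space_mat A"
proof
  fix v assume "v \<in> col_space_mat B"
  then obtain x where vx: "v = B *v x" by (auto simp: col_space_mat_def)
  have lin: "linear ((*v) A)"
    by (rule bounded_linear.linear[OF matrix_vector_mul_bounded_linear])
  have sub: "subspace (range ((*v) A))"
    by (rule linear_subspace_image[OF lin subspace_UNIV])
  then have sp: "span (range ((*v) A)) = range ((*v) A)" by simp
  obtain p b where p0: "p \<in> span (range ((*v) A))"
    and orth0: "\<And>u. u \<in> span (range ((*v) A)) \<Longrightarrow> orthogonal b u" and vpb: "v = p + b"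
    using orthogonal_subspace_decomp_exists[of "range ((*v) A)" v] by blast
  have p: "p \<in> range ((*v) A)" using p0 unfolding sp .
  have orth: "orthogonal b u" if "u \<in> range ((*v) A)" for u
    using orth0[of u] that unfolding sp by simp
  define c where "c = adjoint_mat A *v b"
  have "cinner c c = cinner (A *v c) b"
    by (simp add: c_def cinner_adj)
  then have "norm c ^ 2 = Re (cinner (A *v c) b)"
    by (metis cinner_norm)
  also have "\<dots> = 0" using orth[of "A *v c"]
    by (simp add: cinner_re orthogonal_def inner_commute)
  finally have "c = 0" by simp
  then have "adjoint_mat B *v b = 0" using AB[of b] unfolding c_def by simp
  then have "inner v b = 0"
    using cinner_re[of v b] by (simp add: vx cinner_adj cinner_zero2)
  moreover have "inner p b = 0" using orth[OF p] by (simp add: orthogonal_def inner_commute)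
  ultimately have "inner b b = 0" by (simp add: vpb inner_add)
  then have "b = 0" by simp
  then show "v \<in> col_space_mat A" using p vpb by (simp add: col_space_mat_def)
qed

theorem lemma3p9:
  fixes G :: "complex set" and S :: "complex \<Rightarrow> complex ^ 'q ^ 'p"
  assumes "open G" and "connected G" and "G \<noteq> {}"
    and "\<And>i j. (\<lambda>z. S z $ i $ j) holomorphic_on G"
    and "\<And>z. z \<in> G \<Longrightarrow> onorm (\<lambda>x. S z *v x) \<le> 1"
  shows "(\<forall>U :: complex ^ 'q ^ 'p. adjoint_mat U ** U = mat 1 \<longrightarrow>
            (\<forall>w\<in>G. \<forall>z\<in>G. null_space_mat (U + S w) = null_space_mat (U + S z)))
       \<and> (\<forall>V :: complex ^ 'q ^ 'p. V ** adjoint_mat V = mat 1 \<longrightarrow>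
            (\<forall>w\<in>G. \<forall>z\<in>G. col_space_mat (V + S w) = col_space_mat (V + S z)))"
proof -
  have on: "\<forall>z\<in>G. onorm (\<lambda>x. S z *v x) \<le> 1" using assms(5) by simp
  note pa = part_a[OF assms(1,2,4) on]
  note pb = part_b[OF assms(1,2,4) on]
  show ?thesis
  proof (intro conjI allI impI ballI)
    fix U :: "complex ^ 'q ^ 'p" and w z assume U: "adjoint_mat U ** U = mat 1" "w \<in> G" "z \<in> G"
    show "null_space_mat (U + S w) = null_space_mat (U + S z)"
      using pa[OF U(1,2,3)] pa[OF U(1,3,2)] unfolding null_space_mat_def by blast
  next
    fix V :: "complex ^ 'q ^ 'p" and w z assume V: "V ** adjoint_mat V = mat 1" "w \<in> G" "z \<in> G"
    show "col_space_mat (V + S w) = col_space_mat (V + S z)"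
      using range_incl[OF pb[OF V(1,2,3)]] range_incl[OF pb[OF V(1,3,2)]] by blast
  qed
qed

end
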